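(* Let $(Q,\rightarrow)$ be a finite transition system, $\mathscr{R}$ a preorder on $Q$ and $\mathscr{P}\subseteq\mathscr{R}$ an equivalence relation. Then the following are equivalent: (i) for all $b,d,d'\in Q$ with $d\,\mathscr{P}\,d'$: $d\in\rightarrow^{-1}(\mathscr{R}(b))\iff d'\in\rightarrow^{-1}(\mathscr{R}(b))$; (ii) $\mathscr{P}\circ\rightarrow^{-1}\subseteq\rightarrow^{-1}\circ\mathscr{R}$.
   Context: For relations $\mathscr{R},\mathscr{S}$ on $Q$: $\mathscr{R}(q)=\{q'\mid q\,\mathscr{R}\,q'\}$, $\mathscr{R}(X)=\bigcup_{q\in X}\mathscr{R}(q)$, $\mathscr{R}^{-1}=\{(y,x)\mid(x,y)\in\mathscr{R}\}$, and $\mathscr{S}\circ\mathscr{R}=\{(x,y)\mid y\in\mathscr{S}(\mathscr{R}(x))\}$. A preorder is a reflexive transitive relation. Condition (i) is what the paper calls $\mathscr{P}$ being $\mathscr{R}$-block-stable; condition (ii) is $\mathscr{P}$ being $\mathscr{R}$-stable. *)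

theory Defs
  imports Main
begin

end

theory Submission
  imports Defs
begin

theorem lemma2:
  fixes Q :: "'a set" and T R P :: "('a \<times> 'a) set"
  assumes "finite Q"
    and "T \<subseteq> Q \<times> Q"
    and "R \<subseteq> Q \<times> Q" and "refl_on Q R" and "trans R"
    and "equiv Q P" and "P \<subseteq> R"
  shows "(\<forall>b\<in>Q. \<forall>d\<in>Q. \<forall>d'\<in>Q. (d, d') \<in> P \<longrightarrow>
            (d \<in> (converse T) `` (R `` {b}) \<longleftrightarrow> d' \<in> (converse T) `` (R `` {b})))
         \<longleftrightarrow> (converse T O P \<subseteq> R O converse T)"
proof
  assume H: "\<forall>b\<in>Q. \<forall>d\<in>Q. \<forall>d'\<in>Q. (d, d') \<in> P \<longrightarrow>
            (d \<in> (converse T) `` (R `` {b}) \<longleftrightarrow> d' \<in> (converse T) `` (R `` {b}))"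
  show "converse T O P \<subseteq> R O converse T"
  proof
    fix p assume "p \<in> converse T O P"
    then obtain x y z where p: "p = (x,z)" and yx: "(y,x) \<in> T" and yz: "(y,z) \<in> P" by blast
    have xQ: "x \<in> Q" "y \<in> Q" using yx assms(2) by auto
    have zQ: "z \<in> Q" using yz assms(6) unfolding equiv_def refl_on_def by auto
    have "(x,x) \<in> R" using xQ assms(4) unfolding refl_on_def by auto
    hence "y \<in> (converse T) `` (R `` {x})" using yx by blast
    hence "z \<in> (converse T) `` (R `` {x})" using H xQ zQ yz by blast
    thus "p \<in> R O converse T" using p by blast
  qed
next
  assume H: "converse T O P \<subseteq> R O converse T"
  have sym: "\<And>a c. (a,c) \<in> P \<Longrightarrow> (c,a) \<in> P" using assms(6) unfolding equiv_def sym_def by blast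
  have key: "\<And>b d d'. (d,d') \<in> P \<Longrightarrow> d \<in> (converse T) `` (R `` {b}) \<Longrightarrow> d' \<in> (converse T) `` (R `` {b})"
  proof -
    fix b d d' assume dd: "(d,d') \<in> P" and d: "d \<in> (converse T) `` (R `` {b})"
    then obtain w where bw: "(b,w) \<in> R" and dw: "(d,w) \<in> T" by blast
    have "(w,d') \<in> converse T O P" using dw dd by blast
    with H obtain w' where "(w,w') \<in> R" "(d',w') \<in> T" by blast
    moreover have "(b,w') \<in> R" using bw calculation(1) assms(5) unfolding trans_def by blast
    ultimately show "d' \<in> (converse T) `` (R `` {b})" by blast
  qed
  show "\<forall>b\<in>Q. \<forall>d\<in>Q. \<forall>d'\<in>Q. (d, d') \<in> P \<longrightarrow>
            (d \<in> (converse T) `` (R `` {b}) \<longleftrightarrow> d' \<in> (converse T) `` (R `` {b}))"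
    using key sym by blast
qed

end
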